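(* For every integer $k\ge 0$, $M_{2k+1} < (1.45)^{k+1}$.
   Context: Fix integers $p,q\ge1$. A labeled binary tree is a rooted, ordered, full binary tree (every internal node has exactly two children) whose internal nodes are labeled "+" or "*" and whose leaves are labeled by pairs $(i,j)\in\{1,\dots,q\}\times\{1,\dots,p\}$. $\mathcal{F}_{2k+1}$ is the set of such trees with at most $2k+1$ nodes. For a tree $f$, the integer $M_f$ is defined recursively: - $M_f=1$ if $f$ is a single leaf; - $M_f=M_{f_L}+M_{f_R}$ if the root of $f$ is "+", where $f_L,f_R$ are its left and right subtrees; - $M_f=M_{f_L}\cdot M_{f_R}$ if the root of $f$ is "*". Equivalently, $M_f$ is the length of the expansion vectors $\bm{v},\bm{u}$ with $h(\bm{x};f,\bm{w})=\langle\bm{v},\bm{u}\rangle$, obtained by concatenation at "+" nodes and by all pairwise products at "*" nodes. Finally, $M_{2k+1}=\max_{f\in\mathcal{F}_{2k+1}} M_f$. *)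

theory Defs
  imports Complex_Main
begin

datatype ltree = Leaf "nat \<times> nat" | Plus ltree ltree | Times ltree ltree

fun wf_labels :: "nat \<Rightarrow> nat \<Rightarrow> ltree \<Rightarrow> bool" where
  "wf_labels p q (Leaf (i, j)) = (i \<in> {1..q} \<and> j \<in> {1..p})"
| "wf_labels p q (Plus l r) = (wf_labels p q l \<and> wf_labels p q r)"
| "wf_labels p q (Times l r) = (wf_labels p q l \<and> wf_labels p q r)"

fun nodes :: "ltree \<Rightarrow> nat" where
  "nodes (Leaf _) = 1"
| "nodes (Plus l r) = nodes l + nodes r + 1"
| "nodes (Times l r) = nodes l + nodes r + 1"

fun M :: "ltree \<Rightarrow> nat" where
  "M (Leaf _) = 1"
| "M (Plus l r) = M l + M r"
| "M (Times l r) = M l * M r"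

definition F :: "nat \<Rightarrow> nat \<Rightarrow> nat \<Rightarrow> ltree set" where
  "F p q n = {f. wf_labels p q f \<and> nodes f \<le> n}"

definition Mmax :: "nat \<Rightarrow> nat \<Rightarrow> nat \<Rightarrow> nat" where
  "Mmax p q n = Max (M ` F p q n)"

end

theory Submission
  imports Defs
begin

fun leaves :: "ltree \<Rightarrow> nat" where
  "leaves (Leaf _) = 1"
| "leaves (Plus l r) = leaves l + leaves r"
| "leaves (Times l r) = leaves l + leaves r"

lemma nodes_leaves: "nodes f + 1 = 2 * leaves f"
  by (induction f) auto

lemma leaves_pos: "leaves f \<ge> 1"
  by (induction f) auto

lemma M_pos: "M f \<ge> 1"
  by (induction f) auto

lemma plus_step:
  fixes a b x y :: nat
  assumes a1: "a \<ge> 1" and b1: "b \<ge> 1" and x1: "x \<ge> 1" and y1: "y \<ge> 1"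
    and ha: "a^3 \<le> 3^x" and hb: "b^3 \<le> 3^y" and sa: "x \<le> 4 \<longrightarrow> a \<le> x"
    and sb: "y \<le> 4 \<longrightarrow> b \<le> y"
  shows "(a+b)^3 \<le> 3^(x+y)"
proof -
  have one: "(1+b)^3 \<le> 3^(x+y)" if a1: "x \<ge> 1" "y \<ge> 1" "b \<ge> 1" "b^3 \<le> 3^y"
    "y \<le> 4 \<longrightarrow> b \<le> y" for x y b :: nat
  proof (cases "b \<ge> 3")
    case True
    have "(1+b)^3 \<le> 3*b^3"
    proof -
      define c where "c = b - 3"
      have c: "b = c + 3" using True c_def by arith
      show ?thesis unfolding c by (simp add: power3_eq_cube algebra_simps)
    qed
    also have "\<dots> \<le> 3 * 3^y" using that by simp
    also have "\<dots> = 3^(Suc y)" by simp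
    also have "\<dots> \<le> 3^(x+y)" using that power_increasing[of "Suc y" "x+y" "3::nat"] by simp
    finally show ?thesis .
  next
    case False
    show ?thesis
    proof (cases "b = 1")
      case True
      have "(9::nat) \<le> 3^(x+y)" using power_increasing[of 2 "x+y" "3::nat"] that by simp
      moreover have "(1+b)^3 = (8::nat)" using True by (simp add: power3_eq_cube)
      ultimately show ?thesis by linarith
    next
      case b2: False
      hence "y \<ge> 2" using that False by auto
      hence "(27::nat) \<le> 3^(x+y)" using power_increasing[of 3 "x+y" "3::nat"] that by simp
      moreover have "(1+b)^3 \<le> 27" using False b2 that by (cases "b = 2") (auto simp: power3_eq_cube)
      ultimately show ?thesis by linarith
    qed
  qed
  show ?thesis
  proof (cases "a = 1")
    case True thus ?thesis using one[of x y b] assms by simp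
  next
    case a2: False
    show ?thesis
    proof (cases "b = 1")
      case True thus ?thesis using one[of y x a] assms by (simp add: add.commute)
    next
      case False
      have "a + b \<le> a * b"
      proof -
        define c d where "c = a - 2" and "d = b - 2"
        have "a = c + 2" "b = d + 2" using a2 False a1 b1 c_def d_def by arith+
        thus ?thesis by (simp add: algebra_simps)
      qed
      hence "(a+b)^3 \<le> (a*b)^3" by (simp add: power_mono)
      also have "\<dots> = a^3 * b^3" by (simp add: power_mult_distrib)
      also have "\<dots> \<le> 3^x * 3^y" using ha hb by (simp add: mult_le_mono)
      finally show ?thesis by (simp add: power_add)
    qed
  qed
qed

lemma key: "M f ^ 3 \<le> 3 ^ leaves f \<and> (leaves f \<le> 4 \<longrightarrow> M f \<le> leaves f)"
proof (induction f)
  case (Leaf x) thus ?case by simp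
next
  case (Plus l r)
  have "(M l + M r)^3 \<le> 3^(leaves l + leaves r)"
    using plus_step[of "M l" "M r" "leaves l" "leaves r"] Plus M_pos leaves_pos by auto
  thus ?case using Plus leaves_pos by auto
next
  case (Times l r)
  have "(M l * M r)^3 \<le> 3^(leaves l + leaves r)"
    using Times by (simp add: power_mult_distrib power_add mult_le_mono)
  moreover have "leaves l + leaves r \<le> 4 \<longrightarrow> M l * M r \<le> leaves l + leaves r"
  proof
    assume h: "leaves l + leaves r \<le> 4"
    have "M l \<le> leaves l" "M r \<le> leaves r" "leaves l \<ge> 1" "leaves r \<ge> 1"
      using Times h leaves_pos by auto
    hence "M l * M r \<le> leaves l * leaves r" by (simp add: mult_le_mono)
    also have "\<dots> \<le> leaves l + leaves r" using h \<open>leaves l \<ge> 1\<close> \<open>leaves r \<ge> 1\<close>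
    proof -
      have "leaves l \<le> 3" "leaves r \<le> 3" using h \<open>leaves l \<ge> 1\<close> \<open>leaves r \<ge> 1\<close> by auto
      hence "leaves l = 1 \<or> leaves l = 2 \<or> leaves l = 3" using \<open>leaves l \<ge> 1\<close> by arith
      moreover have "leaves r = 1 \<or> leaves r = 2 \<or> leaves r = 3" using \<open>leaves r \<ge> 1\<close> \<open>leaves r \<le> 3\<close> by arith
      ultimately show ?thesis using h by auto
    qed
    finally show "M l * M r \<le> leaves l + leaves r" .
  qed
  ultimately show ?case by simp
qed

lemma bound_tree:
  assumes "nodes f \<le> 2 * k + 1"
  shows "M f ^ 3 \<le> 3 ^ (k+1)"
proof -
  have "leaves f \<le> k + 1" using nodes_leaves[of f] assms by linarith
  hence "(3::nat) ^ leaves f \<le> 3 ^ (k+1)" using power_increasing[of "leaves f" "k+1" "3::nat"] by simp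
  thus ?thesis using key[of f] by linarith
qed

theorem lemma3:
  fixes p q k :: nat
  assumes "p \<ge> 1" and "q \<ge> 1"
  shows "real (Mmax p q (2 * k + 1)) < (1.45::real) ^ (k + 1)"
proof -
  let ?S = "M ` F p q (2 * k + 1)"
  have sub: "?S \<subseteq> {..3^(k+1)}"
  proof
    fix m assume "m \<in> ?S"
    then obtain f where f: "nodes f \<le> 2*k+1" "m = M f" by (auto simp: F_def)
    have "m \<le> m^3" using M_pos[of f] f by (simp add: power3_eq_cube)
    thus "m \<in> {..3^(k+1)}" using bound_tree[OF f(1)] f by simp
  qed
  hence fin: "finite ?S" using finite_subset by blast
  have "Leaf (1,1) \<in> F p q (2*k+1)" using assms by (simp add: F_def)
  hence ne: "?S \<noteq> {}" by blast
  have "Mmax p q (2*k+1) \<in> ?S" unfolding Mmax_def using Max_in[OF fin ne] .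
  then obtain f where f: "nodes f \<le> 2*k+1" "Mmax p q (2*k+1) = M f" by (auto simp: F_def)
  define m where "m = real (M f)"
  have m0: "m \<ge> 0" by (simp add: m_def)
  have "m^3 \<le> 3^(k+1)"
  proof -
    have "real (M f ^ 3) \<le> real (3 ^ (k+1))" using bound_tree[OF f(1)] by linarith
    thus ?thesis by (simp add: m_def)
  qed
  also have "(3::real)^(k+1) < (1.45^3)^(k+1)"
    by (rule power_strict_mono) (auto simp: power3_eq_cube)
  also have "\<dots> = ((1.45::real)^(k+1))^3" by (metis power_mult mult.commute)
  finally have "m^3 < ((1.45::real)^(k+1))^3" .
  hence "m < (1.45::real)^(k+1)"
    using power_less_imp_less_base[of m 3 "(1.45::real)^(k+1)"] by (simp del: power_Suc)
  thus ?thesis using f(2) m_def by simp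
qed

end
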